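(* Let $X$ be a finite set with $N=|X|$ and $n=\binom N2$. Let $t,t'$ be two equidistant trees on taxa $X$ with the same coarse type $\{X_i\}_{i\in I}$, and let $\Omega>\omega>0$ be such that $\max\{\eta(t),\eta(t')\}\le\Omega$ and $\min\{\nu(t),\nu(t')\}\ge\omega$. Then \[ d_\Delta(t,t')\le (n+\iota)\,2(\Omega-\omega),\qquad \text{where } \iota=\sum_{i\in I}\binom{|X_i|}{2}. \] If moreover $t$ and $t'$ are both binary trees, then $d_\Delta(t,t')\le (2n-N+1)\,2(\Omega-\omega)$.
   Context: An equidistant tree $t$ on taxa $X$ is identified with the vector $(t_{ab})\in\mathbb{R}^n$ (coordinates indexed by unordered pairs of distinct taxa) of leaf-to-leaf path lengths; such vectors are exactly those for which, for all distinct $a,b,c$, $\max\{t_{ab},t_{ac},t_{bc}\}$ is attained at least twice. Trees are considered up to adding a multiple of $\mathbb{1}$ (changing all pendant edge lengths equally). The depth of a node is its distance from the root. Let $M=\max_{a\ne b}t_{ab}$; the depth of the lowest common ancestor of leaves $a\ne b$ equals $(M-t_{ab})/2$. Define $\eta(t)$ = maximal depth of an internal node $=\frac12(M-\min_{a\neq b}t_{ab})$ and $\nu(t)$ = minimal depth of an internal node other than the root $=\frac12\min\{M-t_{ab}: t_{ab}<M\}$ ($+\infty$ if there is none); both are invariant under adding multiples of $\mathbb{1}$. The coarse type of $t$ is the partition of $X$ into the leaf sets of the subtrees at the children of the root, i.e. distinct $a,b$ are in the same block iff $t_{ab}<M$. The tree is binary if every internal node has exactly two children, i.e. for all distinct $a,b,c$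 the numbers $t_{ab},t_{ac},t_{bc}$ are not all equal. $d_{\Delta}(x,y)=\sum_{i=1}^n (y_i-x_i) + n\max_{i}(x_i-y_i)$. *)

theory Defs
  imports Complex_Main "HOL-Library.Extended_Real"
begin

text \<open>A vector indexed by unordered pairs of distinct taxa is modelled as a function
  on two-element sets; only its values on pairs X matter.\<close>

definition pairs :: "'a set \<Rightarrow> 'a set set" where
  "pairs X = {{a, b} | a b. a \<in> X \<and> b \<in> X \<and> a \<noteq> b}"

definition equidistant :: "'a set \<Rightarrow> ('a set \<Rightarrow> real) \<Rightarrow> bool" where
  "equidistant X t \<longleftrightarrow>
     (\<forall>a\<in>X. \<forall>b\<in>X. \<forall>c\<in>X. a \<noteq> b \<and> a \<noteq> c \<and> b \<noteq> c \<longrightarrow>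
       (let m = Max {t {a, b}, t {a, c}, t {b, c}} in
          (t {a, b} = m \<and> t {a, c} = m) \<or> (t {a, b} = m \<and> t {b, c} = m)
          \<or> (t {a, c} = m \<and> t {b, c} = m)))"

definition maxdist :: "'a set \<Rightarrow> ('a set \<Rightarrow> real) \<Rightarrow> real" where
  "maxdist X t = Max (t ` pairs X)"

definition eta :: "'a set \<Rightarrow> ('a set \<Rightarrow> real) \<Rightarrow> real" where
  "eta X t = (maxdist X t - Min (t ` pairs X)) / 2"

definition nu :: "'a set \<Rightarrow> ('a set \<Rightarrow> real) \<Rightarrow> ereal" where
  "nu X t = (let S = {maxdist X t - t p | p. p \<in> pairs X \<and> t p < maxdist X t}
             in if S = {} then \<infinity> else ereal (Min S / 2))"

definition coarse_type :: "'a set \<Rightarrow> ('a set \<Rightarrow> real) \<Rightarrow> 'a set set" where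
  "coarse_type X t = {{b \<in> X. b = a \<or> t {a, b} < maxdist X t} | a. a \<in> X}"

definition binary_tree :: "'a set \<Rightarrow> ('a set \<Rightarrow> real) \<Rightarrow> bool" where
  "binary_tree X t \<longleftrightarrow>
     (\<forall>a\<in>X. \<forall>b\<in>X. \<forall>c\<in>X. a \<noteq> b \<and> a \<noteq> c \<and> b \<noteq> c \<longrightarrow>
       \<not> (t {a, b} = t {a, c} \<and> t {a, c} = t {b, c}))"

definition d_delta :: "'a set \<Rightarrow> ('a set \<Rightarrow> real) \<Rightarrow> ('a set \<Rightarrow> real) \<Rightarrow> real" where
  "d_delta X x y = (\<Sum>p\<in>pairs X. y p - x p)
      + real (card (pairs X)) * Max ((\<lambda>p. x p - y p) ` pairs X)"

end

theory Submission
  imports Defs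
begin

lemma pairs_eq: "pairs X = {B. B \<subseteq> X \<and> card B = 2}"
  unfolding pairs_def by (auto simp: card_2_iff)

lemma card_pairs: "finite X \<Longrightarrow> card (pairs X) = card X choose 2"
  unfolding pairs_eq by (simp add: n_subsets)

lemma finite_pairs: "finite X \<Longrightarrow> finite (pairs X)"
  unfolding pairs_eq by (auto intro: finite_subset[of _ "Pow X"])

lemma le_maxdist:
  assumes "finite X" "a \<in> X" "b \<in> X" "a \<noteq> b"
  shows "t {a, b} \<le> maxdist X t"
proof -
  have "{a,b} \<in> pairs X" using assms unfolding pairs_def by blast
  then show ?thesis unfolding maxdist_def using finite_pairs[OF assms(1)] by simp
qed

lemma trans_lt:
  assumes "finite X" "equidistant X t" "a \<in> X" "b \<in> X" "c \<in> X"
    "a \<noteq> b" "a \<noteq> c" "b \<noteq> c"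
    "t {a, b} < maxdist X t" "t {b, c} < maxdist X t"
  shows "t {a, c} < maxdist X t"
proof (rule ccontr)
  assume "\<not> ?thesis"
  moreover have "t {a, c} \<le> maxdist X t" using le_maxdist assms by metis
  ultimately have e: "t {a,c} = maxdist X t" by simp
  from assms(2,3,4,5,6,7,8) have
    "(let m = Max {t {a, b}, t {a, c}, t {b, c}} in
          (t {a, b} = m \<and> t {a, c} = m) \<or> (t {a, b} = m \<and> t {b, c} = m)
          \<or> (t {a, c} = m \<and> t {b, c} = m))"
    unfolding equidistant_def by blast
  then show False using e assms(9,10) by (simp add: Let_def max_def split: if_splits)
qed

definition blk :: "'a set \<Rightarrow> ('a set \<Rightarrow> real) \<Rightarrow> 'a \<Rightarrow> 'a set" where
  "blk X t a = {b \<in> X. b = a \<or> t {a, b} < maxdist X t}"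

lemma blk_eq:
  assumes "finite X" "equidistant X t" "a \<in> X" "c \<in> X" "a \<in> blk X t c"
  shows "blk X t a = blk X t c"
proof (cases "a = c")
  case True then show ?thesis by simp
next
  case False
  then have ca: "t {c, a} < maxdist X t" using assms(5) unfolding blk_def by auto
  show ?thesis
  proof (rule set_eqI)
    fix x
    show "x \<in> blk X t a \<longleftrightarrow> x \<in> blk X t c"
    proof (cases "x \<in> X")
      case False then show ?thesis unfolding blk_def by auto
    next
      case xX: True
      show ?thesis
      proof (cases "x = a \<or> x = c")
        case True then show ?thesis using ca assms(5) xX
          unfolding blk_def by (auto simp: insert_commute)
      next
        case False
        have "t {a, x} < maxdist X t \<longleftrightarrow> t {c, x} < maxdist X t"
        proof
          assume "t {a, x} < maxdist X t"
          then show "t {c, x} < maxdist X t"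
            using trans_lt[OF assms(1,2), of c a x] ca False \<open>a \<noteq> c\<close> assms xX by auto
        next
          assume h: "t {c, x} < maxdist X t"
          have "t {a, c} < maxdist X t" using ca by (simp add: insert_commute)
          then show "t {a, x} < maxdist X t"
            using trans_lt[OF assms(1,2), of a c x] h False \<open>a \<noteq> c\<close> assms xX by auto
        qed
        then show ?thesis using False unfolding blk_def by auto
      qed
    qed
  qed
qed

lemma same_W:
  assumes "finite X" "equidistant X t" "equidistant X t'"
    "coarse_type X t = coarse_type X t'" "a \<in> X" "b \<in> X" "a \<noteq> b"
  shows "t {a, b} < maxdist X t \<longleftrightarrow> t' {a, b} < maxdist X t'"
proof -
  have "blk X t a \<in> coarse_type X t" using assms(5) unfolding coarse_type_def blk_def by blast
  then have "blk X t a \<in> coarse_type X t'" using assms(4) by simp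
  then obtain c where c: "c \<in> X" "blk X t a = blk X t' c"
    unfolding coarse_type_def blk_def by blast
  have "a \<in> blk X t a" using assms(5) unfolding blk_def by simp
  then have "a \<in> blk X t' c" using c by simp
  then have "blk X t' a = blk X t' c" using blk_eq[OF assms(1,3,5) c(1)] by simp
  then have "blk X t a = blk X t' a" using c by simp
  then have "b \<in> blk X t a \<longleftrightarrow> b \<in> blk X t' a" by simp
  then show ?thesis using assms(6,7) unfolding blk_def by auto
qed


lemma depth_bounds:
  assumes "finite X" "eta X t \<le> \<Omega>" "nu X t \<ge> ereal \<omega>" "p \<in> pairs X"
    "t p < maxdist X t"
  shows "2 * \<omega> \<le> maxdist X t - t p" "maxdist X t - t p \<le> 2 * \<Omega>"
proof -
  let ?M = "maxdist X t"
  define S where "S = {?M - t p | p. p \<in> pairs X \<and> t p < ?M}"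
  have Sim: "S = (\<lambda>p. ?M - t p) ` {p \<in> pairs X. t p < ?M}" unfolding S_def by auto
  have fS: "finite S" unfolding Sim using finite_pairs[OF assms(1)] by simp
  have inS: "?M - t p \<in> S" unfolding S_def using assms(4,5) by blast
  then have "S \<noteq> {}" by auto
  then have "nu X t = ereal (Min S / 2)" unfolding nu_def S_def Let_def by simp
  then have "\<omega> \<le> Min S / 2" using assms(3) by simp
  moreover have "Min S \<le> ?M - t p" using fS inS by simp
  ultimately show "2 * \<omega> \<le> ?M - t p" by simp
  have "Min (t ` pairs X) \<le> t p" using finite_pairs[OF assms(1)] assms(4) by simp
  then show "?M - t p \<le> 2 * \<Omega>" using assms(2) unfolding eta_def by simp
qed

lemma le_maxdist': "finite X \<Longrightarrow> p \<in> pairs X \<Longrightarrow> t p \<le> maxdist X t"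
  unfolding maxdist_def by (intro Max_ge finite_imageI finite_pairs imageI)

theorem mainTheorem5:
  fixes X :: "'a set" and t t' :: "'a set \<Rightarrow> real" and \<Omega> \<omega> :: real
  assumes "finite X"
    and "equidistant X t" and "equidistant X t'"
    and "coarse_type X t = coarse_type X t'"
    and "\<Omega> > \<omega>" and "\<omega> > 0"
    and "max (eta X t) (eta X t') \<le> \<Omega>"
    and "min (nu X t) (nu X t') \<ge> ereal \<omega>"
  shows "d_delta X t t' \<le>
           (real (card X choose 2) + (\<Sum>B\<in>coarse_type X t. real (card B choose 2)))
             * (2 * (\<Omega> - \<omega>)) \<and>
         (binary_tree X t \<and> binary_tree X t' \<longrightarrow>
         d_delta X t t' \<le> (2 * real (card X choose 2) - real (card X) + 1) * (2 * (\<Omega> - \<omega>)))"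
proof -
  let ?P = "pairs X"
  let ?M = "maxdist X t"
  let ?M' = "maxdist X t'"
  define W where "W = {p \<in> ?P. t p < ?M}"
  define \<iota> where "\<iota> = (\<Sum>B\<in>coarse_type X t. real (card B choose 2))"
  define N where "N = card X"
  have fP: "finite ?P" using finite_pairs[OF assms(1)] .
  have nP: "card ?P = N choose 2" unfolding N_def using card_pairs[OF assms(1)] .
  have c: "0 < \<Omega> - \<omega>" using assms(5) by simp
  have iota0: "0 \<le> \<iota>" unfolding \<iota>_def by (simp add: sum_nonneg)
  have WP: "W \<subseteq> ?P" unfolding W_def by auto
  have fW: "finite W" using WP fP finite_subset by blast
  have dW: "d_delta X t t' \<le> 2 * (\<Omega> - \<omega>) * (real (card ?P) + real (card W))"
  proof (cases "?P = {}")
    case True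
    then show ?thesis unfolding d_delta_def W_def using c by simp
  next
    case Pne: False
    define D where "D = (\<lambda>p. t p - t' p)"
    define m where "m = Max (D ` ?P)"
    have "m \<in> D ` ?P" unfolding m_def using fP Pne by (intro Max_in) auto
    then obtain q where q: "q \<in> ?P" "D q = m" by force
    have dd: "d_delta X t t' = (\<Sum>p\<in>?P. m - D p)"
      unfolding d_delta_def m_def D_def
      by (simp add: sum_subtractf sum.distrib algebra_simps)
    have facts: "t p \<le> ?M \<and> t' p \<le> ?M' \<and> (t p < ?M \<longleftrightarrow> t' p < ?M') \<and>
       (t p < ?M \<longrightarrow> 2 * \<omega> \<le> ?M - t p \<and> ?M - t p \<le> 2 * \<Omega> \<and>
          2 * \<omega> \<le> ?M' - t' p \<and> ?M' - t' p \<le> 2 * \<Omega>)" if pP: "p \<in> ?P" for p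
    proof -
      obtain a b where ab: "p = {a,b}" "a \<in> X" "b \<in> X" "a \<noteq> b" using pP unfolding pairs_def by blast
      have sw: "t p < ?M \<longleftrightarrow> t' p < ?M'" using same_W[OF assms(1-4) ab(2-4)] ab(1) by simp
      have e1: "eta X t \<le> \<Omega>" "eta X t' \<le> \<Omega>" using assms(7) by auto
      have n1: "nu X t \<ge> ereal \<omega>" "nu X t' \<ge> ereal \<omega>" using assms(8) by auto
      show ?thesis using sw le_maxdist'[OF assms(1) pP, of t] le_maxdist'[OF assms(1) pP, of t']
        depth_bounds[OF assms(1) e1(1) n1(1) pP] depth_bounds[OF assms(1) e1(2) n1(2) pP]
        by auto
    qed
    have per: "m - D p \<le> 2 * (\<Omega> - \<omega>) * (1 + (if t p < ?M then 1 else 0))" if pP: "p \<in> ?P" for p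
    proof -
      have A: "D q - D p \<le> 2 * (\<Omega> - \<omega>) * ((if t p < ?M then 1 else 0) + (if t q < ?M then 1 else 0))"
        using facts[OF pP] facts[OF q(1)] c unfolding D_def
        by (cases "t p < ?M"; cases "t q < ?M") (simp_all, linarith+)
      show ?thesis using A q(2) c by (auto split: if_splits)
    qed
    have "d_delta X t t' \<le> (\<Sum>p\<in>?P. 2 * (\<Omega> - \<omega>) * (1 + (if t p < ?M then 1 else 0)))"
      unfolding dd by (rule sum_mono) (rule per)
    also have "\<dots> = 2 * (\<Omega> - \<omega>) * (real (card ?P) + (\<Sum>p\<in>?P. (if t p < ?M then 1 else 0)))"
      by (simp add: sum_distrib_left[symmetric] sum.distrib)
    also have "(\<Sum>p\<in>?P. (if t p < ?M then 1 else 0)) = real (card W)"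
      unfolding W_def using fP by (simp add: sum.inter_filter[symmetric])
    finally show ?thesis .
  qed
  have Wi: "real (card W) \<le> \<iota>"
  proof -
    have fCT: "finite (coarse_type X t)"
      unfolding coarse_type_def using assms(1) by simp
    have sub: "W \<subseteq> (\<Union>B\<in>coarse_type X t. pairs B)"
    proof
      fix p assume "p \<in> W"
      then obtain a b where ab: "p = {a,b}" "a \<in> X" "b \<in> X" "a \<noteq> b" "t {a,b} < ?M"
        unfolding W_def pairs_def by blast
      let ?B = "{b \<in> X. b = a \<or> t {a, b} < ?M}"
      have "?B \<in> coarse_type X t" unfolding coarse_type_def using ab by blast
      moreover have "p \<in> pairs ?B" unfolding pairs_def using ab by blast
      ultimately show "p \<in> (\<Union>B\<in>coarse_type X t. pairs B)" by blast
    qed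
    have finB: "finite B" if Bin: "B \<in> coarse_type X t" for B
    proof -
      obtain a where "B = {b \<in> X. b = a \<or> t {a, b} < ?M}" using Bin unfolding coarse_type_def by blast
      then show ?thesis using assms(1) by simp
    qed
    have fU: "finite (\<Union>B\<in>coarse_type X t. pairs B)"
      using fCT finB finite_pairs by blast
    have "card W \<le> card (\<Union>B\<in>coarse_type X t. pairs B)"
      using card_mono[OF fU sub] .
    also have "\<dots> \<le> (\<Sum>B\<in>coarse_type X t. card (pairs B))" by (rule card_UN_le[OF fCT])
    also have "\<dots> = (\<Sum>B\<in>coarse_type X t. card B choose 2)"
      by (rule sum.cong) (simp_all add: card_pairs finB)
    finally have "real (card W) \<le> real (\<Sum>B\<in>coarse_type X t. card B choose 2)"
      by (simp only: of_nat_le_iff)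
    then show ?thesis unfolding \<iota>_def by simp
  qed
  have across: "real (card W) + real N \<le> real (card ?P) + 1"
  proof (cases "?P = {}")
    case True
    then have "N choose 2 = 0" using nP by simp
    then have "N \<le> 1" by (simp add: binomial_eq_0_iff)
    then show ?thesis using True WP by simp
  next
    case Pne: False
    have "?M \<in> t ` ?P" unfolding maxdist_def using fP Pne by (intro Max_in) auto
    then obtain q where q: "q \<in> ?P" "t q = ?M" by force
    obtain a b where ab: "q = {a,b}" "a \<in> X" "b \<in> X" "a \<noteq> b" using q(1) unfolding pairs_def by blast
    define f where "f = (\<lambda>c. if t {a,c} = ?M then {a,c} else {b,c})"
    have maps: "f c \<in> ?P - W" if cX: "c \<in> X - {a}" for c
    proof (cases "t {a,c} = ?M")
      case True
      then show ?thesis using cX ab unfolding f_def W_def pairs_def by auto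
    next
      case False
      then have lt: "t {a,c} < ?M" using le_maxdist[OF assms(1), of a c t] cX ab by auto
      have cb: "c \<noteq> b" using False q(2) ab(1) by auto
      have "\<not> t {b,c} < ?M"
      proof
        assume "t {b,c} < ?M"
        then have "t {c,b} < ?M" by (simp add: insert_commute)
        then have "t {a,b} < ?M" using trans_lt[OF assms(1,2), of a c b] lt cX ab cb by auto
        then show False using q ab by simp
      qed
      then show ?thesis using False cX ab cb unfolding f_def W_def pairs_def by auto
    qed
    have inj: "inj_on f (X - {a})"
    proof (rule inj_onI)
      fix x y assume xy: "x \<in> X - {a}" "y \<in> X - {a}" "f x = f y"
      then show "x = y" unfolding f_def using ab
        by (cases "t {a,x} = ?M"; cases "t {a,y} = ?M") (simp_all add: doubleton_eq_iff, blast+)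
    qed
    have "card (X - {a}) \<le> card (?P - W)"
      using card_inj_on_le[OF inj] maps fP by blast
    moreover have "card (X - {a}) = N - 1" unfolding N_def using ab(2) assms(1) by simp
    moreover have "card (?P - W) = card ?P - card W" using card_Diff_subset[OF fW WP] .
    moreover have "card W \<le> card ?P" using card_mono[OF fP WP] .
    moreover have "N \<ge> 1" unfolding N_def using ab(2) assms(1)
      by (metis One_nat_def Suc_leI card_gt_0_iff empty_iff)
    ultimately have h: "N + card W \<le> card ?P + 1" by linarith
    then have "real (N + card W) \<le> real (card ?P + 1)" by (simp only: of_nat_le_iff)
    then show ?thesis by simp
  qed
  have nR: "real (card ?P) = real (card X choose 2)" using nP unfolding N_def by simp
  have s1: "2 * (\<Omega> - \<omega>) * (real (card ?P) + real (card W)) \<le> 2 * (\<Omega> - \<omega>) * (real (card ?P) + \<iota>)"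
    by (rule mult_left_mono) (use Wi c in simp_all)
  have s2: "2 * (\<Omega> - \<omega>) * (real (card ?P) + real (card W)) \<le> 2 * (\<Omega> - \<omega>) * (2 * real (card ?P) - real N + 1)"
    by (rule mult_left_mono) (use across c in simp_all)
  show ?thesis
  proof
    show "d_delta X t t' \<le> (real (card X choose 2) + (\<Sum>B\<in>coarse_type X t. real (card B choose 2)))
             * (2 * (\<Omega> - \<omega>))"
      using dW s1 nR unfolding \<iota>_def by (simp add: mult.commute)
    show "binary_tree X t \<and> binary_tree X t' \<longrightarrow>
         d_delta X t t' \<le> (2 * real (card X choose 2) - real (card X) + 1) * (2 * (\<Omega> - \<omega>))"
      using dW s2 nR unfolding N_def by (simp add: mult.commute)
  qed
qed

end
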